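(* Let $\gamma_k=\frac{\gamma_0}{(k+1)^a}$ and $\lambda_k=\frac{\lambda_0}{(k+1)^b}$ for $k\ge0$, where $a,b,\gamma_0,\lambda_0$ are positive scalars with $\gamma_0\lambda_0\le 2m/\mu_h$, and let $r<1$. Let $\{x_k\}$ and $\{\bar x_N\}$ be generated by the IR-IG method with these sequences and averaging parameter $r$. If $a>b$, $a>0.5$, $a+b<1$ and $ar\le1$, then $\bar x_N\to x_h^*$ as $N\to\infty$.
   Context: Standing setup: $X\subset\mathbb{R}^n$ is nonempty, compact and convex. $f_1,\dots,f_m:\mathbb{R}^n\to\mathbb{R}$ are convex (possibly nondifferentiable) functions and $f=\sum_{i=1}^m f_i$. $h:\mathbb{R}^n\to\mathbb{R}$ is strongly convex with parameter $\mu_h>0$ (possibly nondifferentiable). Let $X^*=\arg\min_{x\in X}f(x)$ and let $x_h^*$ be the unique minimizer of $h$ over $X^*$. $\mathcal{P}_X$ denotes Euclidean projection onto $X$. IR-IG method: given $x_0\in X$, positive sequences $\{\gamma_k\}$, $\{\lambda_k\}$ and a constant $r<1$, for each $k\ge0$ set $x_{k,0}=x_k$; for $i=0,\dots,m-1$ pick any $g_{f_{i+1}}(x_{k,i})\in\partial f_{i+1}(x_{k,i})$ and $g_h(x_{k,i})\in\partial h(x_{k,i})$ and set $x_{k,i+1}=\mathcal{P}_X\big(x_{k,i}-\gamma_k\big(g_{f_{i+1}}(x_{k,i})+\tfrac{\lambda_k}{m}g_h(x_{k,i})\big)\big)$; then set $x_{k+1}=x_{k,m}$. The averaged iterates are $\bar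 x_N=\sum_{k=0}^{N-1}\gamma_k^r x_k\big/\sum_{k=0}^{N-1}\gamma_k^r$ for $N\ge1$. *)

theory Defs
  imports "HOL-Analysis.Analysis"
begin

definition is_subgradient :: "('a::real_inner \<Rightarrow> real) \<Rightarrow> 'a \<Rightarrow> 'a \<Rightarrow> bool" where
  "is_subgradient f x g \<longleftrightarrow> (\<forall>y. f y \<ge> f x + inner g (y - x))"

definition strongly_convex :: "real \<Rightarrow> ('a::real_normed_vector \<Rightarrow> real) \<Rightarrow> bool" where
  "strongly_convex mu h \<longleftrightarrow>
     (\<forall>x y t. 0 \<le> t \<and> t \<le> 1 \<longrightarrow>
        h ((1 - t) *\<^sub>R x + t *\<^sub>R y) \<le> (1 - t) * h x + t * h y - mu / 2 * t * (1 - t) * (norm (x - y))\<^sup>2)"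

definition argmin_set :: "('a \<Rightarrow> real) \<Rightarrow> 'a set \<Rightarrow> 'a set" where
  "argmin_set F X = {x \<in> X. \<forall>y\<in>X. F x \<le> F y}"

end

theory Submission
  imports Defs
begin


lemma abel_bound:
  fixes c D :: "nat \<Rightarrow> real"
  assumes c0: "\<And>k. 0 \<le> c k" and cmono: "\<And>k. c k \<le> c (Suc k)"
    and D: "\<And>k. 0 \<le> D k" "\<And>k. D k \<le> Delta"
  shows "(\<Sum>k<N. c k * (D k - D (Suc k))) \<le> c N * Delta"
proof -
  have "(\<Sum>k<N. c k * (D k - D (Suc k))) + c N * D N \<le> c N * Delta"
  proof (induction N)
    case 0
    then show ?case using c0[of 0] D[of 0] by (simp add: mult_left_mono)
  next
    case (Suc N)
    have "(\<Sum>k<Suc N. c k * (D k - D (Suc k))) + c (Suc N) * D (Suc N)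
        = ((\<Sum>k<N. c k * (D k - D (Suc k))) + c N * D N) + (c (Suc N) - c N) * D (Suc N)"
      by (simp add: algebra_simps)
    also have "\<dots> \<le> c N * Delta + (c (Suc N) - c N) * Delta"
      using Suc.IH cmono[of N] D[of "Suc N"] by (intro add_mono mult_left_mono) auto
    finally show ?case by (simp add: algebra_simps)
  qed
  moreover have "0 \<le> c N * D N" using c0 D by simp
  ultimately show ?thesis by linarith
qed

lemma cesaro_weighted:
  fixes w u :: "nat \<Rightarrow> real"
  assumes wpos: "\<And>k. 0 < w k" and W: "filterlim (\<lambda>N. \<Sum>k<N. w k) at_top sequentially"
    and u: "u \<longlonglongrightarrow> 0"
  shows "(\<lambda>N. (\<Sum>k<N. w k * u k) / (\<Sum>k<N. w k)) \<longlonglongrightarrow> 0"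
proof (rule LIMSEQ_I)
  fix e :: real assume e: "0 < e"
  obtain K where K: "\<And>k. k \<ge> K \<Longrightarrow> norm (u k) < e/2"
    using LIMSEQ_D[OF u, of "e/2"] e by auto
  define A where "A = (\<Sum>k<K. w k * \<bar>u k\<bar>)"
  have A0: "0 \<le> A" unfolding A_def using wpos by (intro sum_nonneg) (simp add: less_imp_le)
  have "\<forall>\<^sub>F N in sequentially. (\<Sum>k<N. w k) \<ge> 2*A/e + 1"
    using W by (simp add: filterlim_at_top)
  then obtain N1 where N1: "\<And>N. N \<ge> N1 \<Longrightarrow> (\<Sum>k<N. w k) \<ge> 2*A/e + 1"
    by (auto simp: eventually_sequentially)
  show "\<exists>no. \<forall>N\<ge>no. norm ((\<Sum>k<N. w k * u k) / (\<Sum>k<N. w k) - 0) < e"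
  proof (intro exI allI impI)
    fix N assume N: "N \<ge> max N1 K"
    define W where "W = (\<Sum>k<N. w k)"
    have WA: "W \<ge> 2*A/e + 1" using N1[of N] N by (simp add: W_def)
    have Wpos: "W > 0" using WA A0 e by (smt (verit) divide_nonneg_pos)
    have split: "{..<N} = {..<K} \<union> {K..<N}" using N by auto
    have "\<bar>\<Sum>k<N. w k * u k\<bar> \<le> (\<Sum>k<N. w k * \<bar>u k\<bar>)"
      by (rule order_trans[OF sum_abs]) (simp add: abs_mult wpos less_imp_le)
    also have "\<dots> = A + (\<Sum>k\<in>{K..<N}. w k * \<bar>u k\<bar>)"
      unfolding A_def split by (subst sum.union_disjoint) auto
    also have "(\<Sum>k\<in>{K..<N}. w k * \<bar>u k\<bar>) \<le> (\<Sum>k\<in>{K..<N}. w k * (e/2))"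
      using K wpos by (intro sum_mono mult_left_mono) (auto simp: less_imp_le)
    also have "\<dots> \<le> (\<Sum>k<N. w k * (e/2))"
      using wpos e by (intro sum_mono2) (auto simp: less_imp_le)
    also have "\<dots> = W * (e/2)" by (simp add: W_def sum_distrib_right)
    finally have num: "\<bar>\<Sum>k<N. w k * u k\<bar> \<le> A + W * (e/2)" by simp
    have "A < W * (e/2)"
    proof -
      have "2*A/e < W" using WA by linarith
      then have "2*A < W * e" using e by (simp add: divide_less_eq)
      then show ?thesis by simp
    qed
    then have "\<bar>\<Sum>k<N. w k * u k\<bar> < W * e" using num by linarith
    then show "norm ((\<Sum>k<N. w k * u k) / (\<Sum>k<N. w k) - 0) < e"
      using Wpos by (simp add: W_def[symmetric] abs_divide divide_less_eq mult.commute)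
  qed
qed

lemma powr_half_bound:
  fixes t T p :: real
  assumes "T > 0" "T/2 \<le> t" "t \<le> T"
  shows "2 powr (-\<bar>p\<bar>) * T powr p \<le> t powr p"
proof (cases "p \<ge> 0")
  case True
  have a: "(T/2) powr p \<le> t powr p" using assms True by (intro powr_mono2) auto
  have b: "(T/2) powr p = T powr p / 2 powr p" using assms by (simp add: powr_divide)
  have c: "2 powr (-\<bar>p\<bar>) = 1 / 2 powr p" using True by (simp add: powr_minus_divide)
  show ?thesis using a b c by simp
next
  case False
  have a: "T powr p \<le> t powr p" using assms False by (intro powr_mono2') auto
  have "2 powr (-\<bar>p\<bar>) \<le> (2::real) powr 0" by (intro powr_mono) auto
  then have b: "2 powr (-\<bar>p\<bar>) \<le> 1" by simp
  have "2 powr (-\<bar>p\<bar>) * T powr p \<le> 1 * T powr p"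
    by (rule mult_right_mono[OF b]) simp
  then show ?thesis using a by simp
qed

lemma quarter_aux: fixes x y :: real assumes "x/2 \<le> y" "1 \<le> x" shows "(x+1)/4 \<le> y"
proof -
  have "(x+1)/4 = x/4 + 1/4" by simp
  then show ?thesis using assms by linarith
qed
lemma half_aux: fixes x y z :: real assumes "x \<le> 2*z + 1" "z \<le> y" shows "(x+1)/2 \<le> y + 1"
proof -
  have "(x+1)/2 = x/2 + 1/2" by simp
  then show ?thesis using assms by linarith
qed
lemma half_count: assumes "N\<ge>(1::nat)" shows "real (N - N div 2) \<ge> (real N + 1)/4"
proof -
  have d: "2 * (N div 2) \<le> N" by simp
  then have le: "N div 2 \<le> N" by simp
  have "real (N - N div 2) = real N - real (N div 2)" using le by (simp add: of_nat_diff)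
  moreover have "real (2 * (N div 2)) \<le> real N" using d by (simp only: of_nat_le_iff)
  then have "2 * real (N div 2) \<le> real N" by simp
  ultimately have "real (N - N div 2) \<ge> real N / 2" by linarith
  moreover have "real N \<ge> 1" using assms by simp
  ultimately show ?thesis by (rule quarter_aux)
qed
lemma sum_powr_lower:
  fixes p :: real
  assumes N: "N \<ge> 1"
  shows "2 powr (-\<bar>p\<bar>) / 4 * (real N + 1) powr (p + 1) \<le> (\<Sum>k<N. (real k + 1) powr p)"
proof -
  let ?B = "2 powr (-\<bar>p\<bar>) * (real N + 1) powr p"
  have Nd: "N \<le> 2*(N div 2) + 1" by presburger
  have "real N \<le> real (2*(N div 2) + 1)" using Nd by (simp only: of_nat_le_iff)
  then have NdR: "real N \<le> 2*real (N div 2) + 1" by simp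
  have "(\<Sum>k\<in>{N div 2..<N}. ?B) \<le> (\<Sum>k\<in>{N div 2..<N}. (real k + 1) powr p)"
  proof (intro sum_mono powr_half_bound)
    fix k assume k: "k \<in> {N div 2..<N}"
    then have "real (N div 2) \<le> real k" by simp
    then show "(real N + 1)/2 \<le> real k + 1" using NdR by (rule half_aux[rotated])
    show "real k + 1 \<le> real N + 1" using k by simp
  qed simp
  also have "\<dots> \<le> (\<Sum>k<N. (real k + 1) powr p)"
    by (intro sum_mono2) auto
  finally have S: "real (N - N div 2) * ?B \<le> (\<Sum>k<N. (real k + 1) powr p)" by simp
  have c: "real (N - N div 2) \<ge> (real N + 1)/4" by (rule half_count[OF N])
  have "2 powr (-\<bar>p\<bar>) / 4 * (real N + 1) powr (p + 1) = (real N + 1)/4 * ?B"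
    by (simp add: powr_add)
  also have "\<dots> \<le> real (N - N div 2) * ?B" using c by (intro mult_right_mono) auto
  finally show ?thesis using S by linarith
qed

lemma lim_powr_neg:
  fixes e :: real assumes "e < 0"
  shows "(\<lambda>N. (real N + 1) powr e) \<longlonglongrightarrow> 0"
proof (rule tendsto_neg_powr[OF assms])
  show "filterlim (\<lambda>N. real N + 1) at_top sequentially"
    by (rule filterlim_at_top_mono[OF filterlim_real_sequentially]) auto
qed

lemma W_at_top:
  fixes g0 r a :: real
  assumes g0: "g0 > 0" and ar: "a * r \<le> 1"
  shows "filterlim (\<lambda>N. \<Sum>k<N. g0 powr r * (real k + 1) powr (- (a * r))) at_top sequentially"
proof (rule filterlim_at_top_mono)
  show "filterlim (\<lambda>N. g0 powr r * harm N) at_top sequentially"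
    by (rule filterlim_tendsto_pos_mult_at_top[OF tendsto_const _ harm_at_top]) (use g0 in simp)
  show "\<forall>\<^sub>F N in sequentially. g0 powr r * harm N \<le> (\<Sum>k<N. g0 powr r * (real k + 1) powr (- (a * r)))"
  proof (intro always_eventually allI)
    fix N :: nat
    have "harm N = (\<Sum>k<N. inverse (real k + 1) :: real)"
      unfolding harm_def using sum.atLeast1_atMost_eq[of "\<lambda>k. inverse (of_nat k) :: real" N]
      by (simp add: add.commute)
    also have "\<dots> \<le> (\<Sum>k<N. (real k + 1) powr (- (a * r)))"
    proof (intro sum_mono)
      fix k
      have "(real k + 1) powr (-1) \<le> (real k + 1) powr (- (a * r))"
        using ar by (intro powr_mono) auto
      then show "inverse (real k + 1) \<le> (real k + 1) powr (- (a * r))"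
        by (simp add: powr_minus)
    qed
    finally show "g0 powr r * harm N \<le> (\<Sum>k<N. g0 powr r * (real k + 1) powr (- (a * r)))"
      by (simp add: sum_distrib_left[symmetric] mult_left_mono)
  qed
qed

lemma asym:
  fixes gam lam P Q D :: "nat \<Rightarrow> real" and a b g0 l0 r C H Delta :: real
  assumes pa: "a > 0" and pb: "b > 0" and pg: "g0 > 0" and pl: "l0 > 0" and pr: "r < 1"
    and ab: "a > b" and ab1: "a + b < 1" and ar: "a * r \<le> 1"
    and gdef: "\<And>k. gam k = g0 / (real k + 1) powr a"
    and ldef: "\<And>k. lam k = l0 / (real k + 1) powr b"
    and D0: "\<And>k. 0 \<le> D k" and D1: "\<And>k. D k \<le> Delta"
    and ineq: "\<And>k. 2 * gam k * (P k + lam k * Q k) \<le> D k - D (Suc k) + C * (gam k)\<^sup>2"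
    and P0: "\<And>k. 0 \<le> P k" and Qb: "\<And>k. \<bar>Q k\<bar> \<le> H"
  shows "(\<lambda>N. (\<Sum>k<N. gam k powr r * P k) / (\<Sum>k<N. gam k powr r)) \<longlonglongrightarrow> 0"
    and "\<And>e. e > 0 \<Longrightarrow> \<forall>\<^sub>F N in sequentially. (\<Sum>k<N. gam k powr r * Q k) / (\<Sum>k<N. gam k powr r) \<le> e"
proof -
  define t where "t k = real k + 1" for k
  have t1: "t k \<ge> 1" for k by (simp add: t_def)
  have tpos: "t k > 0" for k using t1[of k] by linarith
  have gpow: "gam k powr s = g0 powr s * t k powr (- a * s)" for k s
  proof -
    have "gam k = g0 * t k powr (- a)" using gdef[of k] by (simp add: t_def powr_minus divide_inverse)
    then show ?thesis using pg tpos[of k] by (simp add: powr_mult powr_powr)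
  qed
  have gpos: "gam k > 0" for k using gdef[of k] pg by simp
  have lpos: "lam k > 0" for k using ldef[of k] pl by simp
  have gform: "gam k = g0 * t k powr (- a)" for k using gdef[of k] by (simp add: t_def powr_minus divide_inverse)
  have lform: "lam k = l0 * t k powr (- b)" for k using ldef[of k] by (simp add: t_def powr_minus divide_inverse)
  define w where "w k = gam k powr r" for k
  define c where "c k = gam k powr (r - 1) / 2" for k
  define c2 where "c2 k = c k / lam k" for k
  have wpos: "w k > 0" for k using gpos[of k] by (simp add: w_def)
  have wc: "w k = 2 * c k * gam k" for k
    using gpos[of k] by (simp add: w_def c_def powr_diff)
  have cform: "c k = g0 powr (r - 1) / 2 * t k powr (a * (1 - r))" for k
    using gpow[of k "r-1"] by (simp add: c_def algebra_simps)
  have c0: "c k \<ge> 0" for k by (simp add: c_def)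
  have cmono: "c k \<le> c (Suc k)" for k
    unfolding cform using pr pa by (intro mult_left_mono powr_mono2) (auto simp: t_def)
  have c2form: "c2 k = g0 powr (r - 1) / (2 * l0) * t k powr (a * (1 - r) + b)" for k
  proof -
    have e: "t k powr b * t k powr (a - a * r) = t k powr (a + b - a * r)"
      by (simp add: powr_add[symmetric] algebra_simps)
    show ?thesis
      using tpos[of k] e by (simp add: c2_def cform lform powr_add powr_minus field_simps)
  qed
  have c20: "c2 k \<ge> 0" for k using c0[of k] lpos[of k] by (simp add: c2_def)
  have c2mono: "c2 k \<le> c2 (Suc k)" for k
    unfolding c2form using pr pa pb pl by (intro mult_left_mono powr_mono2) (auto simp: t_def)
  have Delta0: "Delta \<ge> 0" using D0[of 0] D1[of 0] by linarith
  define W where "W N = (\<Sum>k<N. w k)" for N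
  have wform: "w k = g0 powr r * (real k + 1) powr (- (a * r))" for k
    using gpow[of k r] by (simp add: w_def t_def)
  have Winf: "filterlim W at_top sequentially"
    unfolding W_def wform using W_at_top[OF pg ar] .
  define K1 where "K1 = g0 powr r * (2 powr (-\<bar>- (a * r)\<bar>) / 4)"
  have K1pos: "K1 > 0" using pg by (simp add: K1_def)
  have Wlow: "K1 * t N powr (1 - a * r) \<le> W N" if "N \<ge> 1" for N
  proof -
    have "K1 * t N powr (1 - a * r) = g0 powr r * (2 powr (-\<bar>- (a * r)\<bar>) / 4 * (real N + 1) powr (- (a * r) + 1))"
      by (simp add: K1_def t_def)
    also have "\<dots> \<le> g0 powr r * (\<Sum>k<N. (real k + 1) powr (- (a * r)))"
      by (intro mult_left_mono sum_powr_lower that) simp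
    also have "\<dots> = W N" by (simp add: W_def wform sum_distrib_left)
    finally show ?thesis .
  qed
  have Wpos: "W N > 0" if "N \<ge> 1" for N
    using Wlow[OF that] K1pos tpos[of N] by (smt (verit) powr_gt_zero mult_pos_pos)
  have tlim: "(\<lambda>N. t N powr e) \<longlonglongrightarrow> 0" if "e < 0" for e
    unfolding t_def by (rule lim_powr_neg[OF that])
  have ratio_lim: "(\<lambda>N. cc N * Delta / W N) \<longlonglongrightarrow> 0"
    if ccf: "\<And>N. cc N = K * t N powr (a * (1 - r) + e)" and K0: "K \<ge> 0" and e: "a + e < 1" for cc K e
  proof (rule tendsto_sandwich)
    show "\<forall>\<^sub>F N in sequentially. 0 \<le> cc N * Delta / W N"
      using eventually_ge_at_top[of 1]
      by eventually_elim (use Wpos Delta0 K0 in \<open>auto simp: ccf intro!: divide_nonneg_pos\<close>)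
    show "\<forall>\<^sub>F N in sequentially. cc N * Delta / W N \<le> (K * Delta / K1) * t N powr (a + e - 1)"
      using eventually_ge_at_top[of 1]
    proof eventually_elim
      case (elim N)
      have "cc N * Delta / W N \<le> cc N * Delta / (K1 * t N powr (1 - a * r))"
        using Wlow[OF elim] K1pos Delta0 K0 Wpos[OF elim] tpos[of N] by (intro divide_left_mono) (auto simp: ccf)
      also have "\<dots> = (K * Delta / K1) * t N powr (a + e - 1)"
      proof -
        have "t N powr (a * (1 - r) + e) = t N powr (1 - a * r) * t N powr (a + e - 1)"
          by (simp add: powr_add[symmetric] algebra_simps)
        then show ?thesis using tpos[of N] K1pos by (simp add: ccf field_simps)
      qed
      finally show ?case .
    qed
    show "(\<lambda>N. 0) \<longlonglongrightarrow> (0::real)" by simp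
    show "(\<lambda>N. (K * Delta / K1) * t N powr (a + e - 1)) \<longlonglongrightarrow> 0"
      using tlim[of "a + e - 1"] e by (intro tendsto_mult_right_zero) auto
  qed
  have pk1: "w k * P k \<le> c k * (D k - D (Suc k)) + C/2 * (w k * gam k) + H * (w k * lam k)" for k
  proof -
    have m: "c k * (2*gam k*(P k + lam k*Q k)) \<le> c k * (D k - D (Suc k) + C*(gam k)\<^sup>2)"
      by (rule mult_left_mono[OF ineq c0])
    have l: "c k * (2*gam k*(P k + lam k*Q k)) = w k * P k + w k * lam k * Q k"
      by (simp add: wc algebra_simps)
    have rr: "c k * (D k - D (Suc k) + C*(gam k)\<^sup>2) = c k * (D k - D (Suc k)) + C/2 * (w k * gam k)"
      by (simp add: wc power2_eq_square algebra_simps)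
    have "w k * lam k * (- Q k) \<le> w k * lam k * H"
      using Qb[of k] wpos[of k] lpos[of k] by (intro mult_left_mono) auto
    then have "- (w k * lam k * Q k) \<le> H * (w k * lam k)" by (simp add: algebra_simps)
    then show ?thesis using m l rr by linarith
  qed
  have pk2: "w k * Q k \<le> c2 k * (D k - D (Suc k)) + C/2 * (w k * (gam k / lam k))" for k
  proof -
    have m: "c2 k * (2*gam k*(P k + lam k*Q k)) \<le> c2 k * (D k - D (Suc k) + C*(gam k)\<^sup>2)"
      by (rule mult_left_mono[OF ineq c20])
    have l: "c2 k * (2*gam k*(P k + lam k*Q k)) = w k / lam k * P k + w k * Q k"
      using lpos[of k] by (simp add: c2_def wc field_simps)
    have rr: "c2 k * (D k - D (Suc k) + C*(gam k)\<^sup>2) = c2 k * (D k - D (Suc k)) + C/2 * (w k * (gam k / lam k))"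
      using lpos[of k] by (simp add: c2_def wc power2_eq_square field_simps)
    have "w k / lam k * P k \<ge> 0" using wpos[of k] lpos[of k] P0[of k] by simp
    then show ?thesis using m l rr by linarith
  qed
  have S1: "(\<Sum>k<N. w k * P k) \<le> c N * Delta + C/2 * (\<Sum>k<N. w k * gam k) + H * (\<Sum>k<N. w k * lam k)" for N
  proof -
    have "(\<Sum>k<N. w k * P k) \<le> (\<Sum>k<N. c k * (D k - D (Suc k)) + C/2 * (w k * gam k) + H * (w k * lam k))"
      by (rule sum_mono[OF pk1])
    also have "\<dots> = (\<Sum>k<N. c k * (D k - D (Suc k))) + C/2 * (\<Sum>k<N. w k * gam k) + H * (\<Sum>k<N. w k * lam k)"
      by (simp add: sum.distrib sum_distrib_left)
    also have "(\<Sum>k<N. c k * (D k - D (Suc k))) \<le> c N * Delta"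
      by (rule abel_bound[where c=c and D=D, OF c0 cmono D0 D1])
    finally show ?thesis by simp
  qed
  have S2: "(\<Sum>k<N. w k * Q k) \<le> c2 N * Delta + C/2 * (\<Sum>k<N. w k * (gam k / lam k))" for N
  proof -
    have "(\<Sum>k<N. w k * Q k) \<le> (\<Sum>k<N. c2 k * (D k - D (Suc k)) + C/2 * (w k * (gam k / lam k)))"
      by (rule sum_mono[OF pk2])
    also have "\<dots> = (\<Sum>k<N. c2 k * (D k - D (Suc k))) + C/2 * (\<Sum>k<N. w k * (gam k / lam k))"
      by (simp add: sum.distrib sum_distrib_left)
    also have "(\<Sum>k<N. c2 k * (D k - D (Suc k))) \<le> c2 N * Delta"
      by (rule abel_bound[where c=c2 and D=D, OF c20 c2mono D0 D1])
    finally show ?thesis by simp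
  qed
  have glim: "gam \<longlonglongrightarrow> 0"
    unfolding gform using tlim[of "-a"] pa by (intro tendsto_mult_right_zero) auto
  have llim: "lam \<longlonglongrightarrow> 0"
    unfolding lform using tlim[of "-b"] pb by (intro tendsto_mult_right_zero) auto
  have glform: "gam k / lam k = (g0 / l0) * t k powr (b - a)" for k
  proof -
    have "t k powr (b - a) = t k powr (-a) / t k powr (-b)" by (simp add: powr_diff[symmetric])
    then show ?thesis using tpos[of k] pl by (simp add: gform lform field_simps)
  qed
  have gllim: "(\<lambda>k. gam k / lam k) \<longlonglongrightarrow> 0"
    unfolding glform using tlim[of "b-a"] ab by (intro tendsto_mult_right_zero) auto
  have L1: "(\<lambda>N. (\<Sum>k<N. w k * gam k) / W N) \<longlonglongrightarrow> 0"
    unfolding W_def by (rule cesaro_weighted[OF wpos Winf[unfolded W_def] glim])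
  have L2: "(\<lambda>N. (\<Sum>k<N. w k * lam k) / W N) \<longlonglongrightarrow> 0"
    unfolding W_def by (rule cesaro_weighted[OF wpos Winf[unfolded W_def] llim])
  have L3: "(\<lambda>N. (\<Sum>k<N. w k * (gam k / lam k)) / W N) \<longlonglongrightarrow> 0"
    unfolding W_def by (rule cesaro_weighted[OF wpos Winf[unfolded W_def] gllim])
  have R1: "(\<lambda>N. c N * Delta / W N) \<longlonglongrightarrow> 0"
    by (rule ratio_lim[of c "g0 powr (r - 1) / 2" 0]) (use cform pa ab1 pb in auto)
  have R2: "(\<lambda>N. c2 N * Delta / W N) \<longlonglongrightarrow> 0"
    by (rule ratio_lim[of c2 "g0 powr (r - 1) / (2 * l0)" b]) (use c2form pl ab1 in auto)
  have main1: "(\<lambda>N. (\<Sum>k<N. w k * P k) / W N) \<longlonglongrightarrow> 0"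
  proof (rule tendsto_sandwich)
    show "\<forall>\<^sub>F N in sequentially. 0 \<le> (\<Sum>k<N. w k * P k) / W N"
      using eventually_ge_at_top[of 1]
      by eventually_elim (use Wpos P0 wpos in \<open>auto intro!: divide_nonneg_pos sum_nonneg simp: less_imp_le\<close>)
    show "\<forall>\<^sub>F N in sequentially. (\<Sum>k<N. w k * P k) / W N \<le>
        c N * Delta / W N + C/2 * ((\<Sum>k<N. w k * gam k) / W N) + H * ((\<Sum>k<N. w k * lam k) / W N)"
      using eventually_ge_at_top[of 1]
    proof eventually_elim
      case (elim N)
      have "(\<Sum>k<N. w k * P k) / W N \<le> (c N * Delta + C/2 * (\<Sum>k<N. w k * gam k) + H * (\<Sum>k<N. w k * lam k)) / W N"
        using S1[of N] Wpos[OF elim] by (intro divide_right_mono) auto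
      then show ?case by (simp add: add_divide_distrib)
    qed
    show "(\<lambda>N. 0) \<longlonglongrightarrow> (0::real)" by simp
    show "(\<lambda>N. c N * Delta / W N + C/2 * ((\<Sum>k<N. w k * gam k) / W N) + H * ((\<Sum>k<N. w k * lam k) / W N)) \<longlonglongrightarrow> 0"
      using R1 L1 L2 by (intro tendsto_add_zero tendsto_mult_right_zero)
  qed
  then show "(\<lambda>N. (\<Sum>k<N. gam k powr r * P k) / (\<Sum>k<N. gam k powr r)) \<longlonglongrightarrow> 0"
    by (simp add: w_def W_def)
  have main2: "(\<lambda>N. c2 N * Delta / W N + C/2 * ((\<Sum>k<N. w k * (gam k / lam k)) / W N)) \<longlonglongrightarrow> 0"
    using R2 L3 by (intro tendsto_add_zero tendsto_mult_right_zero)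
  fix e :: real assume e: "e > 0"
  have ev: "\<forall>\<^sub>F N in sequentially. c2 N * Delta / W N + C/2 * ((\<Sum>k<N. w k * (gam k / lam k)) / W N) < e"
    by (rule order_tendstoD(2)[OF main2 e])
  show "\<forall>\<^sub>F N in sequentially. (\<Sum>k<N. gam k powr r * Q k) / (\<Sum>k<N. gam k powr r) \<le> e"
    using ev eventually_ge_at_top[of 1]
  proof eventually_elim
    case (elim N)
    have "(\<Sum>k<N. w k * Q k) / W N \<le> (c2 N * Delta + C/2 * (\<Sum>k<N. w k * (gam k / lam k))) / W N"
      using S2[of N] Wpos[OF elim(2)] by (intro divide_right_mono) auto
    then have "(\<Sum>k<N. w k * Q k) / W N \<le> e"
      using elim(1) by (simp add: add_divide_distrib)
    then show ?case by (simp add: w_def W_def)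
  qed
qed



lemma norm_diff_sq:
  fixes a b :: "'a::real_inner"
  shows "(norm (a - b))\<^sup>2 = (norm a)\<^sup>2 - 2 * inner a b + (norm b)\<^sup>2"
  by (simp add: power2_norm_eq_inner inner_diff_left inner_diff_right inner_commute)

lemma subgrad_norm_bound:
  fixes f :: "'a::real_inner \<Rightarrow> real"
  assumes sg: "is_subgradient f x g" and x: "norm x \<le> R"
    and bnd: "\<And>y. norm y \<le> R + 1 \<Longrightarrow> \<bar>f y\<bar> \<le> M"
  shows "norm g \<le> 2 * M"
proof (cases "g = 0")
  case True
  have "\<bar>f x\<bar> \<le> M" using bnd x by simp
  then show ?thesis using True by simp
next
  case False
  define y where "y = x + (1 / norm g) *\<^sub>R g"
  have "norm y \<le> norm x + norm ((1 / norm g) *\<^sub>R g)" unfolding y_def by (rule norm_triangle_ineq)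
  also have "norm ((1 / norm g) *\<^sub>R g) = 1" using False by simp
  finally have ny: "norm y \<le> R + 1" using x by simp
  have "f y \<ge> f x + inner g (y - x)" using sg by (simp add: is_subgradient_def)
  also have "inner g (y - x) = norm g"
    using False by (simp add: y_def inner_commute power2_norm_eq_inner[symmetric] power2_eq_square)
  finally have "norm g \<le> f y - f x" by simp
  moreover have "\<bar>f y\<bar> \<le> M" "\<bar>f x\<bar> \<le> M" using bnd ny x by auto
  ultimately show ?thesis by linarith
qed

lemma convex_lipschitz_bound:
  fixes f :: "'a::real_normed_vector \<Rightarrow> real"
  assumes cvx: "convex_on UNIV f" and u: "norm u \<le> R" and v: "norm v \<le> R"
    and bnd: "\<And>y. norm y \<le> R + 1 \<Longrightarrow> \<bar>f y\<bar> \<le> M"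
  shows "f v - f u \<le> 2 * M * norm (v - u)"
proof (cases "u = v")
  case True
  then show ?thesis by simp
next
  case False
  define d where "d = norm (v - u)"
  have d: "d > 0" using False by (simp add: d_def)
  define w where "w = v + (1 / d) *\<^sub>R (v - u)"
  have "norm w \<le> norm v + norm ((1 / d) *\<^sub>R (v - u))" unfolding w_def by (rule norm_triangle_ineq)
  also have "norm ((1 / d) *\<^sub>R (v - u)) = 1" using d by (simp add: d_def)
  finally have nw: "norm w \<le> R + 1" using v by simp
  define t where "t = d / (1 + d)"
  have t0: "0 \<le> t" "t \<le> 1" using d by (auto simp: t_def)
  have d1: "1 + d \<noteq> 0" "d \<noteq> 0" "d + d * d \<noteq> 0" using d by (auto, smt (verit) mult_pos_pos)
  have td: "t / d = 1 / (1 + d)" using d1 by (simp add: t_def)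
  have tt: "t + t / d = 1" unfolding td t_def using d1
    by (simp add: add_divide_distrib[symmetric] add.commute)
  have "(1 - t) *\<^sub>R u + t *\<^sub>R w = u + (t + t / d) *\<^sub>R (v - u)"
    by (simp add: w_def algebra_simps)
  also have "\<dots> = v" using tt by simp
  finally have vv: "(1 - t) *\<^sub>R u + t *\<^sub>R w = v" .
  have "f ((1 - t) *\<^sub>R u + t *\<^sub>R w) \<le> (1 - t) * f u + t * f w"
    using cvx t0 unfolding convex_on_def by auto
  then have "f v - f u \<le> t * (f w - f u)" using vv by (simp add: algebra_simps)
  also have "\<dots> \<le> t * (2 * M)"
    using bnd[OF nw] bnd[of u] u t0 by (intro mult_left_mono) auto
  also have "\<dots> \<le> d * (2 * M)"
  proof -
    have "t \<le> d" using d by (simp add: t_def field_simps)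
    moreover have "0 \<le> M" using bnd[of u] u by auto
    ultimately show ?thesis by (intro mult_right_mono) auto
  qed
  finally show ?thesis by (simp add: d_def mult.commute)
qed

lemma sc_convex:
  fixes h :: "'a::real_normed_vector \<Rightarrow> real"
  assumes "mu > 0" "strongly_convex mu h"
  shows "convex_on UNIV h"
  unfolding convex_on_def
proof (intro conjI ballI allI impI)
  fix x y :: 'a and u v :: real
  assume uv: "0 \<le> u" "0 \<le> v" "u + v = 1"
  have "h ((1 - v) *\<^sub>R x + v *\<^sub>R y) \<le> (1 - v) * h x + v * h y - mu / 2 * v * (1 - v) * (norm (x - y))\<^sup>2"
    using assms(2) uv unfolding strongly_convex_def by auto
  moreover have "mu / 2 * v * (1 - v) * (norm (x - y))\<^sup>2 \<ge> 0" using assms(1) uv by simp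
  moreover have "1 - v = u" using uv by simp
  ultimately show "h (u *\<^sub>R x + v *\<^sub>R y) \<le> u * h x + v * h y" by simp
qed simp



theorem theorem1:
  fixes X :: "'a::euclidean_space set"
    and m :: nat
    and fs :: "nat \<Rightarrow> 'a \<Rightarrow> real"
    and h :: "'a \<Rightarrow> real"
    and mu_h a b gamma0 lambda0 r :: real
    and xh :: 'a
    and x :: "nat \<Rightarrow> nat \<Rightarrow> 'a"
    and gf gh :: "nat \<Rightarrow> nat \<Rightarrow> 'a"
    and gamma lambda :: "nat \<Rightarrow> real"
    and xbar :: "nat \<Rightarrow> 'a"
  assumes gamma_def: "\<And>k. gamma k = gamma0 / (real k + 1) powr a"
    and lambda_def: "\<And>k. lambda k = lambda0 / (real k + 1) powr b"
    and xbar_def: "\<And>N. N \<ge> 1 \<Longrightarrow> xbar N = (\<Sum>k<N. gamma k powr r *\<^sub>R x k 0) /\<^sub>R (\<Sum>k<N. gamma k powr r)"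
    and X: "X \<noteq> {}" "compact X" "convex X"
    and m: "m \<ge> 1"
    and f_convex: "\<And>i. 1 \<le> i \<Longrightarrow> i \<le> m \<Longrightarrow> convex_on UNIV (fs i)"
    and h_sc: "mu_h > 0" "strongly_convex mu_h h"
    and xh: "xh \<in> argmin_set (\<lambda>z. \<Sum>i=1..m. fs i z) X"
           "\<forall>y\<in>argmin_set (\<lambda>z. \<Sum>i=1..m. fs i z) X. h xh \<le> h y"
    and params: "a > 0" "b > 0" "gamma0 > 0" "lambda0 > 0"
           "gamma0 * lambda0 \<le> 2 * real m / mu_h" "r < 1"
    and x0: "x 0 0 \<in> X"
    and subgrad_f: "\<And>k i. i < m \<Longrightarrow> is_subgradient (fs (Suc i)) (x k i) (gf k i)"
    and subgrad_h: "\<And>k i. i < m \<Longrightarrow> is_subgradient h (x k i) (gh k i)"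
    and step: "\<And>k i. i < m \<Longrightarrow> x k (Suc i) =
           closest_point X (x k i - gamma k *\<^sub>R (gf k i + (lambda k / real m) *\<^sub>R gh k i))"
    and outer: "\<And>k. x (Suc k) 0 = x k m"
    and rates: "a > b" "a > 1/2" "a + b < 1" "a * r \<le> 1"
  shows "xbar \<longlonglongrightarrow> xh"
proof -
  define F where "F z = (\<Sum>i=1..m. fs i z)" for z
  have cX: "closed X" using X(2) by (rule compact_imp_closed)
  obtain R where R: "R > 0" "\<And>z. z \<in> X \<Longrightarrow> norm z \<le> R"
    using compact_imp_bounded[OF X(2)] unfolding bounded_pos by auto
  have hcvx: "convex_on UNIV h" by (rule sc_convex[OF h_sc])
  have cont_f: "continuous_on UNIV (fs i)" if "1 \<le> i" "i \<le> m" for i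
    by (rule convex_on_continuous[OF open_UNIV f_convex[OF that]])
  have cont_h: "continuous_on UNIV h" by (rule convex_on_continuous[OF open_UNIV hcvx])
  have cont_F: "continuous_on UNIV F"
    unfolding F_def by (intro continuous_on_sum) (use cont_f in auto)
  define Gb where "Gb y = \<bar>h y\<bar> + (\<Sum>i=1..m. \<bar>fs i y\<bar>)" for y
  have cont_Gb: "continuous_on (cball 0 (R+1)) Gb"
    unfolding Gb_def
    by (intro continuous_on_add continuous_on_rabs continuous_on_sum continuous_on_subset[OF cont_h]
        continuous_on_subset[OF cont_f]) auto
  obtain y0 where y0: "y0 \<in> cball 0 (R+1)" "\<And>y. y \<in> cball 0 (R+1) \<Longrightarrow> Gb y \<le> Gb y0"
    using continuous_attains_sup[OF compact_cball _ cont_Gb] R by fastforce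
  define M where "M = Gb y0"
  have hb: "\<bar>h y\<bar> \<le> M" if "norm y \<le> R + 1" for y
  proof -
    have "\<bar>h y\<bar> \<le> Gb y" unfolding Gb_def by (simp add: sum_nonneg)
    then show ?thesis using y0(2)[of y] that by (simp add: M_def)
  qed
  have fb: "\<bar>fs i y\<bar> \<le> M" if "1 \<le> i" "i \<le> m" "norm y \<le> R + 1" for i y
  proof -
    have "\<bar>fs i y\<bar> \<le> (\<Sum>i=1..m. \<bar>fs i y\<bar>)"
      by (rule member_le_sum[of i "{1..m}" "\<lambda>i. \<bar>fs i y\<bar>"]) (use that in auto)
    also have "\<dots> \<le> Gb y" unfolding Gb_def by simp
    finally show ?thesis using y0(2)[of y] that by (simp add: M_def)
  qed
  have M0: "M \<ge> 0" using hb[of 0] R by (smt (verit) norm_zero)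
  have xin_inner: "x k i \<in> X" if "x k 0 \<in> X" "i \<le> m" for k i
    using that(2)
  proof (induction i)
    case 0 then show ?case using that(1) by simp
  next
    case (Suc i)
    then show ?case using step[of i k] closest_point_in_set[OF cX X(1)] by simp
  qed
  have x0in: "x k 0 \<in> X" for k
  proof (induction k)
    case 0 then show ?case using x0 .
  next
    case (Suc k) then show ?case using outer[of k] xin_inner[of k m] by simp
  qed
  have xin: "x k i \<in> X" if "i \<le> m" for k i using xin_inner[OF x0in that] .
  have xR: "norm (x k i) \<le> R" if "i \<le> m" for k i using R(2) xin[OF that] .
  have gpos: "gamma k > 0" for k using gamma_def[of k] params by simp
  have lpos: "lambda k > 0" for k using lambda_def[of k] params by simp
  have lle: "lambda k \<le> lambda0" for k
  proof -
    have "1 \<le> (real k + 1) powr b" using params by (intro ge_one_powr_ge_zero) auto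
    then show ?thesis using lambda_def[of k] params by (simp add: divide_le_eq)
  qed
  have mR: "real m \<ge> 1" using m by simp
  have lm0: "0 \<le> lambda k / real m" for k using lpos[of k] mR by simp
  have lm1: "lambda k / real m \<le> lambda0" for k
  proof -
    have "lambda k / real m \<le> lambda k" using lpos[of k] mR by (simp add: divide_le_eq)
    then show ?thesis using lle[of k] by linarith
  qed
  define G where "G = 2*M + lambda0 * (2*M)"
  have G0: "G \<ge> 0" using M0 params by (simp add: G_def)
  define gg where "gg k i = gf k i + (lambda k / real m) *\<^sub>R gh k i" for k i
  define Fk where "Fk k i z = fs (Suc i) z + (lambda k / real m) * h z" for k i z
  have ggb: "norm (gg k i) \<le> G" if "i < m" for k i
  proof -
    have n1: "norm (gf k i) \<le> 2 * M"
      by (rule subgrad_norm_bound[OF subgrad_f[OF that] xR]) (use that fb in auto)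
    have n2: "norm (gh k i) \<le> 2 * M"
      by (rule subgrad_norm_bound[OF subgrad_h[OF that] xR]) (use that hb in auto)
    have "norm (gg k i) \<le> norm (gf k i) + (lambda k / real m) * norm (gh k i)"
      unfolding gg_def using lm0[of k] by (metis norm_triangle_ineq norm_scaleR abs_of_nonneg)
    also have "(lambda k / real m) * norm (gh k i) \<le> lambda0 * (2*M)"
      using lm0[of k] lm1[of k] n2 M0 by (intro mult_mono) auto
    finally show ?thesis using n1 by (simp add: G_def)
  qed
  have ggsub: "Fk k i y \<ge> Fk k i (x k i) + inner (gg k i) (y - x k i)" if "i < m" for k i y
  proof -
    have s1: "fs (Suc i) y \<ge> fs (Suc i) (x k i) + inner (gf k i) (y - x k i)"
      using subgrad_f[OF that] by (simp add: is_subgradient_def)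
    have s2: "h y \<ge> h (x k i) + inner (gh k i) (y - x k i)"
      using subgrad_h[OF that] by (simp add: is_subgradient_def)
    have "(lambda k / real m) * (h (x k i) + inner (gh k i) (y - x k i)) \<le> (lambda k / real m) * h y"
      by (rule mult_left_mono[OF s2 lm0])
    then show ?thesis using s1 by (simp add: Fk_def gg_def inner_add_left algebra_simps)
  qed
  have Flip: "Fk k i v - Fk k i u \<le> G * norm (v - u)" if "i < m" "u \<in> X" "v \<in> X" for k i u v
  proof -
    have l1: "fs (Suc i) v - fs (Suc i) u \<le> 2 * M * norm (v - u)"
      by (rule convex_lipschitz_bound[OF f_convex R(2) R(2)]) (use that fb in auto)
    have l2: "h v - h u \<le> 2 * M * norm (v - u)"
      by (rule convex_lipschitz_bound[OF hcvx R(2) R(2)]) (use that hb in auto)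
    have "(lambda k / real m) * (h v - h u) \<le> (lambda k / real m) * (2 * M * norm (v - u))"
      by (rule mult_left_mono[OF l2 lm0])
    also have "\<dots> \<le> lambda0 * (2 * M * norm (v - u))"
      using lm1[of k] M0 by (intro mult_right_mono) auto
    finally have l3: "(lambda k / real m) * (h v - h u) \<le> lambda0 * (2 * M * norm (v - u))" .
    have e1: "Fk k i v - Fk k i u = (fs (Suc i) v - fs (Suc i) u) + (lambda k / real m) * (h v - h u)"
      by (simp add: Fk_def right_diff_distrib)
    have e2: "G * norm (v - u) = 2 * M * norm (v - u) + lambda0 * (2 * M * norm (v - u))"
      by (simp add: G_def algebra_simps)
    show ?thesis using l1 l3 e1 e2 by linarith
  qed
  have drift1: "norm (x k (Suc i) - x k i) \<le> gamma k * G" if "i < m" for k i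
  proof -
    have "x k i = closest_point X (x k i)" using xin[of i k] that by (simp add: closest_point_self)
    then have "norm (x k (Suc i) - x k i) = dist (closest_point X (x k i - gamma k *\<^sub>R gg k i)) (closest_point X (x k i))"
      using step[OF that, of k] by (simp add: gg_def dist_norm)
    also have "\<dots> \<le> dist (x k i - gamma k *\<^sub>R gg k i) (x k i)"
      by (rule closest_point_lipschitz[OF X(3) cX X(1)])
    also have "\<dots> = gamma k * norm (gg k i)" using gpos[of k] by (simp add: dist_norm)
    also have "\<dots> \<le> gamma k * G" using ggb[OF that] gpos[of k] by simp
    finally show ?thesis .
  qed
  have drift: "norm (x k i - x k 0) \<le> real i * (gamma k * G)" if "i \<le> m" for k i
    using that
  proof (induction i)
    case 0 then show ?case by simp
  next
    case (Suc i)
    have "norm (x k (Suc i) - x k 0) \<le> norm (x k (Suc i) - x k i) + norm (x k i - x k 0)"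
      using norm_triangle_ineq[of "x k (Suc i) - x k i" "x k i - x k 0"] by simp
    also have "\<dots> \<le> gamma k * G + real i * (gamma k * G)"
      using drift1[of i k] Suc by (intro add_mono) auto
    finally show ?case by (simp add: algebra_simps)
  qed
  have onestep: "(norm (x k (Suc i) - y))\<^sup>2 \<le> (norm (x k i - y))\<^sup>2 - 2 * gamma k * (Fk k i (x k i) - Fk k i y) + (gamma k)\<^sup>2 * G\<^sup>2"
    if "i < m" "y \<in> X" for k i y
  proof -
    define z where "z = x k i - gamma k *\<^sub>R gg k i"
    have "norm (x k (Suc i) - y) = dist (closest_point X z) (closest_point X y)"
      using step[OF that(1), of k] that(2) by (simp add: z_def gg_def closest_point_self dist_norm)
    also have "\<dots> \<le> dist z y" by (rule closest_point_lipschitz[OF X(3) cX X(1)])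
    finally have n1: "norm (x k (Suc i) - y) \<le> norm (z - y)" by (simp add: dist_norm)
    have sq: "(norm (x k (Suc i) - y))\<^sup>2 \<le> (norm (z - y))\<^sup>2"
      using n1 by (intro power_mono) auto
    have zeq: "z - y = (x k i - y) - gamma k *\<^sub>R gg k i" by (simp add: z_def)
    have zy0: "(norm (z - y))\<^sup>2 = (norm (x k i - y))\<^sup>2 - 2 * inner (x k i - y) (gamma k *\<^sub>R gg k i) + (norm (gamma k *\<^sub>R gg k i))\<^sup>2"
      unfolding zeq by (rule norm_diff_sq)
    have zy: "(norm (z - y))\<^sup>2 = (norm (x k i - y))\<^sup>2 - 2 * (gamma k * inner (gg k i) (x k i - y)) + (gamma k)\<^sup>2 * (norm (gg k i))\<^sup>2"
      unfolding zy0 by (simp add: inner_commute power_mult_distrib)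
    have sg: "inner (gg k i) (x k i - y) \<ge> Fk k i (x k i) - Fk k i y"
    proof -
      have "inner (gg k i) (y - x k i) = - inner (gg k i) (x k i - y)"
        by (simp add: inner_diff_right)
      then show ?thesis using ggsub[OF that(1), of k y] by linarith
    qed
    have sg2: "gamma k * inner (gg k i) (x k i - y) \<ge> gamma k * (Fk k i (x k i) - Fk k i y)"
      using sg gpos[of k] by (intro mult_left_mono) auto
    have gg2: "(norm (gg k i))\<^sup>2 \<le> G\<^sup>2" using ggb[OF that(1), of k] by (intro power_mono) auto
    have gg3: "(gamma k)\<^sup>2 * (norm (gg k i))\<^sup>2 \<le> (gamma k)\<^sup>2 * G\<^sup>2"
      using gg2 by (intro mult_left_mono) auto
    show ?thesis using sq zy sg2 gg3 by linarith
  qed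
  have acc: "(norm (x k i - y))\<^sup>2 \<le> (norm (x k 0 - y))\<^sup>2 - 2 * gamma k * (\<Sum>j<i. Fk k j (x k 0) - Fk k j y)
      + real i * (3 * real m * (gamma k)\<^sup>2 * G\<^sup>2)" if "i \<le> m" "y \<in> X" for k i y
    using that(1)
  proof (induction i)
    case 0 then show ?case by simp
  next
    case (Suc i)
    have im: "i < m" using Suc by simp
    have A: "(norm (x k (Suc i) - y))\<^sup>2 \<le> (norm (x k i - y))\<^sup>2 - 2 * gamma k * (Fk k i (x k i) - Fk k i y) + (gamma k)\<^sup>2 * G\<^sup>2"
      by (rule onestep[OF im that(2)])
    have IH: "(norm (x k i - y))\<^sup>2 \<le> (norm (x k 0 - y))\<^sup>2 - 2 * gamma k * (\<Sum>j<i. Fk k j (x k 0) - Fk k j y)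
      + real i * (3 * real m * (gamma k)\<^sup>2 * G\<^sup>2)" using Suc by simp
    have B: "Fk k i (x k 0) - Fk k i (x k i) \<le> G * norm (x k 0 - x k i)"
      by (rule Flip[OF im xin xin]) (use im in auto)
    have "norm (x k 0 - x k i) \<le> real i * (gamma k * G)"
      using drift[of i k] im by (simp add: norm_minus_commute)
    also have "\<dots> \<le> real m * (gamma k * G)"
      using im gpos[of k] G0 by (intro mult_right_mono) auto
    finally have "G * norm (x k 0 - x k i) \<le> G * (real m * (gamma k * G))"
      using G0 by (intro mult_left_mono) auto
    with B have B2: "Fk k i (x k 0) - Fk k i (x k i) \<le> real m * gamma k * G\<^sup>2"
      by (simp add: power2_eq_square algebra_simps)
    have e1: "2 * gamma k * (Fk k i (x k 0) - Fk k i (x k i)) \<le> 2 * gamma k * (real m * gamma k * G\<^sup>2)"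
      using B2 gpos[of k] by (intro mult_left_mono) auto
    have e1': "2 * gamma k * (real m * gamma k * G\<^sup>2) = 2 * (real m * (gamma k)\<^sup>2 * G\<^sup>2)"
      by (simp add: power2_eq_square algebra_simps)
    have e2: "(gamma k)\<^sup>2 * G\<^sup>2 \<le> real m * (gamma k)\<^sup>2 * G\<^sup>2"
      using mult_right_mono[OF mR, of "(gamma k)\<^sup>2 * G\<^sup>2"] by (simp add: mult.assoc)
    have e3: "2 * gamma k * (Fk k i (x k i) - Fk k i y) = 2 * gamma k * (Fk k i (x k 0) - Fk k i y) - 2 * gamma k * (Fk k i (x k 0) - Fk k i (x k i))"
      by (simp add: algebra_simps)
    have e4: "2 * gamma k * (\<Sum>j<Suc i. Fk k j (x k 0) - Fk k j y) = 2 * gamma k * (\<Sum>j<i. Fk k j (x k 0) - Fk k j y) + 2 * gamma k * (Fk k i (x k 0) - Fk k i y)"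
      by (simp add: algebra_simps)
    have e5: "real (Suc i) * (3 * real m * (gamma k)\<^sup>2 * G\<^sup>2) = real i * (3 * real m * (gamma k)\<^sup>2 * G\<^sup>2) + 3 * (real m * (gamma k)\<^sup>2 * G\<^sup>2)"
      by (simp add: algebra_simps)
    show ?case using A IH e1 e1' e2 e3 e4 e5 by linarith
  qed
  have sumF: "(\<Sum>j<m. Fk k j z) = F z + lambda k * h z" for k z
  proof -
    have "(\<Sum>j<m. Fk k j z) = (\<Sum>j<m. fs (Suc j) z) + real m * ((lambda k / real m) * h z)"
      by (simp add: Fk_def sum.distrib)
    also have "(\<Sum>j<m. fs (Suc j) z) = F z"
      using sum.atLeast1_atMost_eq[of "\<lambda>i. fs i z" m] by (simp add: F_def)
    also have "real m * ((lambda k / real m) * h z) = lambda k * h z" using mR by simp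
    finally show ?thesis .
  qed
  have xhX: "xh \<in> X" and xhmin: "\<And>y. y \<in> X \<Longrightarrow> F xh \<le> F y"
    using xh(1) by (auto simp: argmin_set_def F_def)
  define D where "D k = (norm (x k 0 - xh))\<^sup>2" for k
  define C where "C = 3 * (real m)\<^sup>2 * G\<^sup>2"
  have key: "2 * gamma k * ((F (x k 0) - F xh) + lambda k * (h (x k 0) - h xh)) \<le> D k - D (Suc k) + C * (gamma k)\<^sup>2" for k
  proof -
    have a1: "D (Suc k) \<le> D k - 2 * gamma k * (\<Sum>j<m. Fk k j (x k 0) - Fk k j xh) + real m * (3 * real m * (gamma k)\<^sup>2 * G\<^sup>2)"
      using acc[of m xh k] xhX outer[of k] by (simp add: D_def)
    have a2: "(\<Sum>j<m. Fk k j (x k 0) - Fk k j xh) = (F (x k 0) - F xh) + lambda k * (h (x k 0) - h xh)"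
      by (simp add: sum_subtractf sumF algebra_simps)
    have a3: "real m * (3 * real m * (gamma k)\<^sup>2 * G\<^sup>2) = C * (gamma k)\<^sup>2"
      by (simp add: C_def power2_eq_square algebra_simps)
    show ?thesis using a1 a2 a3 by simp
  qed
  define P where "P k = F (x k 0) - F xh" for k
  define Q where "Q k = h (x k 0) - h xh" for k
  have P0: "0 \<le> P k" for k using xhmin[OF x0in[of k]] by (simp add: P_def)
  have Qb: "\<bar>Q k\<bar> \<le> 2 * M" for k
  proof -
    have "\<bar>h (x k 0)\<bar> \<le> M" using hb xR[of 0 k] by simp
    moreover have "\<bar>h xh\<bar> \<le> M" using hb R(2)[OF xhX] by simp
    ultimately show ?thesis by (simp add: Q_def)
  qed
  have D0: "0 \<le> D k" for k by (simp add: D_def)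
  have D1: "D k \<le> (2 * R)\<^sup>2" for k
  proof -
    have "norm (x k 0 - xh) \<le> norm (x k 0) + norm xh" by (rule norm_triangle_ineq4)
    also have "\<dots> \<le> 2 * R" using xR[of 0 k] R(2)[OF xhX] by simp
    finally show ?thesis unfolding D_def by (intro power_mono) auto
  qed
  have key': "2 * gamma k * (P k + lambda k * Q k) \<le> D k - D (Suc k) + C * (gamma k)\<^sup>2" for k
    using key[of k] by (simp add: P_def Q_def)
  note AS = asym[
      OF params(1) params(2) params(3) params(4) params(6) rates(1) rates(3) rates(4)
      gamma_def lambda_def D0 D1 key' P0 Qb]
  have Fcvx: "convex_on UNIV F"
    unfolding convex_on_def
  proof (intro conjI ballI allI impI)
    fix y z :: 'a and u v :: real assume uv: "0 \<le> u" "0 \<le> v" "u + v = 1"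
    have "F (u *\<^sub>R y + v *\<^sub>R z) \<le> (\<Sum>i=1..m. u * fs i y + v * fs i z)"
      unfolding F_def using f_convex uv by (intro sum_mono) (auto simp: convex_on_def)
    also have "\<dots> = u * F y + v * F z" by (simp add: F_def sum.distrib sum_distrib_left)
    finally show "F (u *\<^sub>R y + v *\<^sub>R z) \<le> u * F y + v * F z" .
  qed simp
  have Wpos: "(\<Sum>k<N. gamma k powr r) > 0" if "N \<ge> 1" for N
  proof (intro sum_pos)
    have "0 \<in> {..<N}" using that by simp
    then show "{..<N} \<noteq> {}" by blast
    show "0 < gamma i powr r" for i using gpos[of i] by simp
  qed simp
  have xbar_eq: "xbar N = (\<Sum>k<N. (gamma k powr r / (\<Sum>k<N. gamma k powr r)) *\<^sub>R x k 0)" if "N \<ge> 1" for N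
    using xbar_def[OF that] by (simp add: scaleR_sum_right divide_inverse mult.commute)
  have asum: "(\<Sum>k<N. gamma k powr r / (\<Sum>k<N. gamma k powr r)) = 1" if "N \<ge> 1" for N
    using Wpos[OF that] by (simp add: sum_divide_distrib[symmetric])
  have xbarX: "xbar N \<in> X" if "N \<ge> 1" for N
    unfolding xbar_eq[OF that]
    by (rule convex_sum[OF finite_lessThan X(3) asum[OF that]]) (use x0in Wpos[OF that] in \<open>auto intro!: divide_nonneg_pos\<close>)
  have jensen: "phi (xbar N) - phi xh \<le> (\<Sum>k<N. gamma k powr r * (phi (x k 0) - phi xh)) / (\<Sum>k<N. gamma k powr r)"
    if "convex_on UNIV phi" "N \<ge> 1" for phi N
  proof -
    define W where "W = (\<Sum>k<N. gamma k powr r)"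
    have "phi (xbar N) \<le> (\<Sum>k<N. (gamma k powr r / W) * phi (x k 0))"
      unfolding xbar_eq[OF that(2)] W_def
      by (rule convex_on_sum[OF finite_lessThan _ that(1) asum[OF that(2)]]) (use that(2) Wpos[OF that(2)] in \<open>auto intro!: divide_nonneg_pos\<close>)
    also have "\<dots> = (\<Sum>k<N. gamma k powr r * phi (x k 0)) / W"
      by (simp add: sum_divide_distrib)
    finally have j: "phi (xbar N) \<le> (\<Sum>k<N. gamma k powr r * phi (x k 0)) / W" .
    have "(\<Sum>k<N. gamma k powr r * (phi (x k 0) - phi xh)) / W = (\<Sum>k<N. gamma k powr r * phi (x k 0)) / W - phi xh"
      using Wpos[OF that(2)] by (simp add: W_def right_diff_distrib sum_subtractf sum_distrib_right[symmetric] diff_divide_distrib)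
    then show ?thesis using j by (simp add: W_def)
  qed
  have lim1: "(\<lambda>N. (\<Sum>k<N. gamma k powr r * P k) / (\<Sum>k<N. gamma k powr r)) \<longlonglongrightarrow> 0"
    by (rule AS(1))
  show ?thesis
    unfolding tendsto_iff
  proof (intro allI impI)
    fix e :: real assume e: "e > 0"
    define K where "K = X \<inter> - ball xh e"
    have Kc: "compact K" unfolding K_def
      by (rule compact_Int_closed[OF X(2)]) (simp add: closed_Compl)
    show "\<forall>\<^sub>F N in sequentially. dist (xbar N) xh < e"
    proof (cases "K = {}")
      case True
      show ?thesis using eventually_ge_at_top[of 1]
      proof eventually_elim
        case (elim N)
        then have "xbar N \<in> X" by (rule xbarX)
        then have "xbar N \<in> ball xh e" using True by (auto simp: K_def)
        then show ?case by (simp add: dist_commute)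
      qed
    next
      case False
      define psi where "psi z = max (F z - F xh) (h z - h xh)" for z
      have cpsi: "continuous_on K psi" unfolding psi_def
        by (intro continuous_on_max continuous_on_diff continuous_on_const
            continuous_on_subset[OF cont_F] continuous_on_subset[OF cont_h]) auto
      obtain z0 where z0: "z0 \<in> K" "\<And>y. y \<in> K \<Longrightarrow> psi z0 \<le> psi y"
        using continuous_attains_inf[OF Kc False cpsi] by auto
      have dpos: "psi z0 > 0"
      proof (rule ccontr)
        assume "\<not> psi z0 > 0"
        then have Fz: "F z0 \<le> F xh" and hz: "h z0 \<le> h xh" by (auto simp: psi_def)
        have z0X: "z0 \<in> X" and z0d: "e \<le> dist xh z0" using z0(1) by (auto simp: K_def)
        define mp where "mp = (1/2) *\<^sub>R z0 + (1/2) *\<^sub>R xh"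
        have mpX: "mp \<in> X" using X(3) z0X xhX unfolding convex_def mp_def by auto
        have "F mp \<le> (1/2) * F z0 + (1/2) * F xh"
        proof -
          have A: "F (u *\<^sub>R z0 + v *\<^sub>R xh) \<le> u * F z0 + v * F xh" if "0 \<le> u" "0 \<le> v" "u + v = 1" for u v
            using Fcvx that unfolding convex_on_def by blast
          have "F ((1/2) *\<^sub>R z0 + (1/2) *\<^sub>R xh) \<le> (1/2) * F z0 + (1/2) * F xh"
            by (rule A) auto
          then show ?thesis by (simp add: mp_def)
        qed
        then have Fmp: "F mp \<le> F xh" using Fz by linarith
        have "mp \<in> argmin_set (\<lambda>z. \<Sum>i=1..m. fs i z) X"
          using mpX Fmp xhmin unfolding argmin_set_def F_def by (auto intro: order_trans)
        then have hmp: "h xh \<le> h mp" using xh(2) by blast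
        have sc: "h ((1 - 1/2) *\<^sub>R z0 + (1/2) *\<^sub>R xh) \<le> (1 - 1/2) * h z0 + (1/2) * h xh
            - mu_h / 2 * (1/2) * (1 - 1/2) * (norm (z0 - xh))\<^sup>2"
        proof -
          have sc0: "\<forall>x y t. 0 \<le> t \<and> t \<le> 1 \<longrightarrow>
        h ((1 - t) *\<^sub>R x + t *\<^sub>R y) \<le> (1 - t) * h x + t * h y - mu_h / 2 * t * (1 - t) * (norm (x - y))\<^sup>2"
            using h_sc(2) unfolding strongly_convex_def .
          show ?thesis by (rule sc0[rule_format, of "1/2" z0 xh]) simp
        qed
        have "norm (z0 - xh) > 0" using z0d e by (simp add: dist_norm norm_minus_commute) (metis diff_self norm_zero not_le)
        then have "mu_h / 2 * (1/2) * (1 - 1/2) * (norm (z0 - xh))\<^sup>2 > 0" using h_sc(1) by simp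
        then have "h mp < (1/2) * h z0 + (1/2) * h xh" using sc by (simp add: mp_def)
        then show False using hz hmp by linarith
      qed
      have ev1: "\<forall>\<^sub>F N in sequentially. (\<Sum>k<N. gamma k powr r * P k) / (\<Sum>k<N. gamma k powr r) < psi z0"
        by (rule order_tendstoD(2)[OF lim1 dpos])
      have ev2: "\<forall>\<^sub>F N in sequentially. (\<Sum>k<N. gamma k powr r * Q k) / (\<Sum>k<N. gamma k powr r) \<le> psi z0 / 2"
        by (rule AS(2)) (use dpos in simp)
      show ?thesis using ev1 ev2 eventually_ge_at_top[of 1]
      proof eventually_elim
        case (elim N)
        have j1: "F (xbar N) - F xh < psi z0"
          using jensen[OF Fcvx elim(3)] elim(1) by (simp add: P_def)
        have j2: "h (xbar N) - h xh < psi z0"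
          using jensen[OF hcvx elim(3)] elim(2) dpos unfolding Q_def by linarith
        have "psi (xbar N) < psi z0" using j1 j2 by (simp add: psi_def)
        then have "xbar N \<notin> K" using z0(2) by force
        then have "xbar N \<in> ball xh e" using xbarX[OF elim(3)] by (auto simp: K_def)
        then show ?case by (simp add: dist_commute)
      qed
    qed
  qed
qed

end
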